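(* Fix $i\in\{1,2,3\}$. Suppose (i) $Q_{k,i}\to Q_{\infty,i}$ as $k\to\infty$ with $Q_{\infty,i}=\mathrm{diag}(Q_{\infty,i}^{11},Q_{\infty,i}^{22})$; (ii) the dual of the terminal payoff $\widehat\Psi^i(z)\doteq-\sup_{x\in\mathbb{R}^n}\{\psi^i(x,z)-\Psi(x)\}$ is continuous; and (iii) there exist $r_0>0,\varepsilon_0>0$ with $\widehat\Psi^i(z)\le-\tfrac12z^T(Q_{\infty,i}^{22}+\varepsilon_0I)z$ for all $|z|>r_0$. Then for every $x\in\mathbb{R}^n$, $W_k(x)\to W_\infty(x)\doteq\tfrac12x^TQ_{\infty,i}^{11}x+\kappa$, where $\kappa\doteq\sup_{z\in\mathbb{R}^n}\{\widehat\Psi^i(z)+\tfrac12z^TQ_{\infty,i}^{22}z\}$.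
   Context: Consider $x_{k+1}=Ax_k+Bw_k$, $x_0=x\in\mathbb{R}^n$, and the value function $W_K(x)=\sup_{w}\big[\sum_{k=0}^{K-1}(\tfrac12x_k^T\Phi x_k-\tfrac{\gamma^2}{2}|w_k|^2)+\Psi(x_K)\big]$ with $\Phi=\Phi^T>0$ and terminal payoff $\Psi$ (possibly non-quadratic, bounded above by $\tfrac r2|x|^2+c$). Let $\mathcal{S}_k$ be the $k$-step dynamic programming operator, so $W_k=\mathcal{S}_k\Psi$. Basis functions: $\psi^1(x,z)=z^Tx$, $\psi^2(x,z)=-\tfrac12(x-z)^TM(x-z)$ ($M=M^T>0$), $\psi^3(x,z)=\delta(x-z)$ ($\delta(0)=0$, $-\infty$ otherwise). Define $\mathrm{S}_{k,i}(x,z)=(\mathcal{S}_k\psi^i(\cdot,z))(x)=\tfrac12[x;z]^TQ_{k,i}[x;z]$, with $Q_{k,i}$ symmetric with $n\times n$ blocks $Q_{k,i}^{jl}$. Then $W_k(x)=\sup_{z}\{\mathrm{S}_{k,i}(x,z)+\widehat\Psi^i(z)\}$. *)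

theory Defs
  imports "HOL-Analysis.Analysis"
begin

fun traj :: "real^'n^'n \<Rightarrow> real^'m^'n \<Rightarrow> real^'n \<Rightarrow> (nat \<Rightarrow> real^'m) \<Rightarrow> nat \<Rightarrow> real^'n" where
  "traj A B x w 0 = x"
| "traj A B x w (Suc k) = A *v traj A B x w k + B *v w k"

definition running_cost :: "real^'n^'n \<Rightarrow> real \<Rightarrow> real^'n \<Rightarrow> real^'m \<Rightarrow> real" where
  "running_cost Phi gamma x w = (1/2) * (x \<bullet> (Phi *v x)) - (gamma^2/2) * (norm w)^2"

definition DP_op :: "real^'n^'n \<Rightarrow> real^'m^'n \<Rightarrow> real^'n^'n \<Rightarrow> real \<Rightarrow> nat
    \<Rightarrow> (real^'n \<Rightarrow> ereal) \<Rightarrow> real^'n \<Rightarrow> ereal" where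
  "DP_op A B Phi gamma K phi x =
     (SUP w. ereal (\<Sum>k<K. running_cost Phi gamma (traj A B x w k) (w k)) + phi (traj A B x w K))"

definition value_fn :: "real^'n^'n \<Rightarrow> real^'m^'n \<Rightarrow> real^'n^'n \<Rightarrow> real \<Rightarrow> (real^'n \<Rightarrow> real)
    \<Rightarrow> nat \<Rightarrow> real^'n \<Rightarrow> ereal" where
  "value_fn A B Phi gamma Psi K x = DP_op A B Phi gamma K (\<lambda>y. ereal (Psi y)) x"

definition psi_basis :: "real^'n^'n \<Rightarrow> nat \<Rightarrow> real^'n \<Rightarrow> real^'n \<Rightarrow> ereal" where
  "psi_basis M i x z =
     (if i = 1 then ereal (z \<bullet> x)
      else if i = 2 then ereal (- (1/2) * ((x - z) \<bullet> (M *v (x - z))))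
      else (if x = z then 0 else -\<infinity>))"

definition dual_payoff :: "real^'n^'n \<Rightarrow> nat \<Rightarrow> (real^'n \<Rightarrow> real) \<Rightarrow> real^'n \<Rightarrow> ereal" where
  "dual_payoff M i Psi z = - (SUP x. psi_basis M i x z - ereal (Psi x))"

text \<open>(1/2)[x;z]^T Q [x;z] for Q given by its n x n blocks Q^11, Q^12, Q^21, Q^22.\<close>
definition block_quad :: "real^'n^'n \<Rightarrow> real^'n^'n \<Rightarrow> real^'n^'n \<Rightarrow> real^'n^'n
    \<Rightarrow> real^'n \<Rightarrow> real^'n \<Rightarrow> real" where
  "block_quad Q11 Q12 Q21 Q22 x z =
     (1/2) * (x \<bullet> (Q11 *v x) + x \<bullet> (Q12 *v z) + z \<bullet> (Q21 *v x) + z \<bullet> (Q22 *v z))"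

end

theory Submission
  imports Defs
begin

lemma mv_bound:
  fixes A :: "real^'n^'n"
  shows "norm (A *v x) \<le> real CARD('n) * norm A * norm x"
proof -
  have "norm (A *v x) \<le> (\<Sum>i\<in>UNIV. \<bar>(A *v x) $ i\<bar>)" by (rule norm_le_l1_cart)
  also have "\<dots> \<le> (\<Sum>i\<in>(UNIV::'n set). norm A * norm x)"
  proof (rule sum_mono)
    fix i
    have "\<bar>(A *v x) $ i\<bar> \<le> norm(A $ i) * norm x"
      by (simp add: matrix_mult_dot Cauchy_Schwarz_ineq2)
    also have "\<dots> \<le> norm A * norm x"
      by (rule mult_right_mono[OF Finite_Cartesian_Product.norm_nth_le]) simp
    finally show "\<bar>(A *v x) $ i\<bar> \<le> norm A * norm x" .
  qed
  also have "\<dots> = real CARD('n) * norm A * norm x" by simp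
  finally show ?thesis .
qed

lemma scaleR_mv: "((c::real) *\<^sub>R (Q::real^'n^'n)) *v z = c *\<^sub>R (Q *v z)"
  by (simp add: matrix_vector_mult_def vec_eq_iff sum_distrib_left algebra_simps)

lemma qbound:
  fixes A :: "real^'n^'n"
  shows "\<bar>y \<bullet> (A *v x)\<bar> \<le> real CARD('n) * norm A * (norm y * norm x)"
proof -
  have "\<bar>y \<bullet> (A *v x)\<bar> \<le> norm y * norm (A *v x)" by (rule Cauchy_Schwarz_ineq2)
  also have "\<dots> \<le> norm y * (real CARD('n) * norm A * norm x)"
    by (rule mult_left_mono[OF mv_bound]) simp
  finally show ?thesis by (simp add: algebra_simps)
qed



theorem theorem4p5:
  fixes A :: "real^'n^'n" and B :: "real^'m^'n" and Phi M :: "real^'n^'n"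
    and gamma :: real and Psi :: "real^'n \<Rightarrow> real" and i :: nat
    and Q11 Q12 Q21 Q22 :: "nat \<Rightarrow> real^'n^'n" and Q11inf Q22inf :: "real^'n^'n"
  assumes i_range: "i \<in> {1, 2, 3}"
    and Phi_sym: "transpose Phi = Phi"
    and Phi_pos: "\<forall>x. x \<noteq> 0 \<longrightarrow> x \<bullet> (Phi *v x) > 0"
    and M_sym: "transpose M = M"
    and M_pos: "\<forall>x. x \<noteq> 0 \<longrightarrow> x \<bullet> (M *v x) > 0"
    and Psi_bound: "\<exists>r c. \<forall>x. Psi x \<le> r / 2 * (norm x)^2 + c"
    and Q_sym: "\<forall>k. transpose (Q11 k) = Q11 k \<and> transpose (Q22 k) = Q22 k
                    \<and> Q21 k = transpose (Q12 k)"
    and S_quad: "\<exists>k0. \<forall>k\<ge>k0. \<forall>x z.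
        DP_op A B Phi gamma k (\<lambda>y. psi_basis M i y z) x
          = ereal (block_quad (Q11 k) (Q12 k) (Q21 k) (Q22 k) x z)"
    and W_repr: "\<forall>k x. value_fn A B Phi gamma Psi k x
        = (SUP z. DP_op A B Phi gamma k (\<lambda>y. psi_basis M i y z) x + dual_payoff M i Psi z)"
    and lim11: "Q11 \<longlonglongrightarrow> Q11inf"
    and lim12: "Q12 \<longlonglongrightarrow> 0"
    and lim21: "Q21 \<longlonglongrightarrow> 0"
    and lim22: "Q22 \<longlonglongrightarrow> Q22inf"
    and dual_finite: "\<forall>z. \<bar>dual_payoff M i Psi z\<bar> \<noteq> \<infinity>"
    and dual_cont: "continuous_on UNIV (\<lambda>z. real_of_ereal (dual_payoff M i Psi z))"
    and growth: "\<exists>r0 > 0. \<exists>eps0 > 0. \<forall>z. norm z > r0 \<longrightarrow>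
        dual_payoff M i Psi z \<le> ereal (- (1/2) * (z \<bullet> ((Q22inf + eps0 *\<^sub>R mat 1) *v z)))"
  shows "\<forall>x. (\<lambda>k. value_fn A B Phi gamma Psi k x) \<longlonglongrightarrow>
           ereal ((1/2) * (x \<bullet> (Q11inf *v x)))
             + (SUP z. dual_payoff M i Psi z + ereal ((1/2) * (z \<bullet> (Q22inf *v z))))"
  proof
  fix x :: "real^'n"
  obtain k0 where k0: "\<forall>k\<ge>k0. \<forall>x z.
        DP_op A B Phi gamma k (\<lambda>y. psi_basis M i y z) x
          = ereal (block_quad (Q11 k) (Q12 k) (Q21 k) (Q22 k) x z)" using S_quad by blast
  obtain r0 eps0 where r0: "r0 > 0" and eps0: "eps0 > 0" and gr: "\<forall>z. norm z > r0 \<longrightarrow>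
        dual_payoff M i Psi z \<le> ereal (- (1/2) * (z \<bullet> ((Q22inf + eps0 *\<^sub>R mat 1) *v z)))"
    using growth by blast
  define d where "d z = real_of_ereal (dual_payoff M i Psi z)" for z
  have dE: "dual_payoff M i Psi z = ereal (d z)" for z
    using dual_finite unfolding d_def by (simp add: ereal_real')
  define g where "g z = d z + (1/2) * (z \<bullet> (Q22inf *v z))" for z
  define L where "L = (1/2) * (x \<bullet> (Q11inf *v x))"
  define f where "f k z = block_quad (Q11 k) (Q12 k) (Q21 k) (Q22 k) x z + d z" for k z
  define C where "C = real CARD('n)"
  have C0: "C \<ge> 0" unfolding C_def by simp
  have W: "value_fn A B Phi gamma Psi k x = (SUP z. ereal (f k z))" if "k \<ge> k0" for k
    unfolding W_repr[rule_format] using k0 that by (simp add: dE f_def)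
  have gcont: "continuous_on UNIV g"
    unfolding g_def using dual_cont unfolding d_def[abs_def]
    by (intro continuous_intros) auto
  have ggr: "g z \<le> - (eps0/2) * (norm z)^2" if "norm z > r0" for z
  proof -
    have "d z \<le> - (1/2) * (z \<bullet> ((Q22inf + eps0 *\<^sub>R mat 1) *v z))"
      using gr that dE by (metis ereal_less_eq(3))
    also have "z \<bullet> ((Q22inf + eps0 *\<^sub>R mat 1) *v z) = z \<bullet> (Q22inf *v z) + eps0 * (z \<bullet> z)"
      by (simp add: matrix_vector_mult_add_rdistrib inner_add_right scaleR_mv)
    finally show ?thesis unfolding g_def by (simp add: power2_norm_eq_inner algebra_simps)
  qed
  obtain Bd where Bd: "\<forall>y\<in>g ` cball 0 r0. norm y \<le> Bd"
    using compact_imp_bounded[OF compact_continuous_image[OF continuous_on_subset[OF gcont] compact_cball]]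
    unfolding bounded_iff by blast
  have gub: "g z \<le> max Bd 0" for z
  proof (cases "norm z > r0")
    case True
    have "0 \<le> (eps0/2) * (norm z)^2" using eps0 by simp
    then show ?thesis using ggr[OF True] by linarith
  next
    case False
    then have "norm (g z) \<le> Bd" using Bd by auto
    then show ?thesis by auto
  qed
  have fin: "\<bar>SUP z. ereal (g z)\<bar> \<noteq> \<infinity>"
  proof -
    obtain G where G: "\<And>z. g z \<le> G" using gub by blast
    have "(SUP z. ereal (g z)) \<le> ereal G" by (rule SUP_least) (metis ereal_less_eq(3) G)
    moreover have "ereal (g 0) \<le> (SUP z. ereal (g z))" by (rule SUP_upper) auto
    ultimately show ?thesis by auto
  qed
  define \<kappa> where "\<kappa> = (SUP z. g z)"
  have kE: "ereal \<kappa> = (SUP z. ereal (g z))" unfolding \<kappa>_def using ereal_SUP[OF fin] .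
  have gk: "g z \<le> \<kappa>" for z
  proof -
    have "ereal (g z) \<le> ereal \<kappa>" unfolding kE by (rule SUP_upper) auto
    then show ?thesis by simp
  qed
  have kg: "\<exists>z. a < g z" if "a < \<kappa>" for a
  proof -
    have "ereal a < ereal \<kappa>" using that by simp
    then have "ereal a < (SUP z. ereal (g z))" unfolding kE .
    then show ?thesis by (auto simp: less_SUP_iff)
  qed
  have target: "ereal ((1/2) * (x \<bullet> (Q11inf *v x)))
             + (SUP z. dual_payoff M i Psi z + ereal ((1/2) * (z \<bullet> (Q22inf *v z)))) = ereal (L + \<kappa>)"
  proof -
    have "(SUP z. dual_payoff M i Psi z + ereal ((1/2) * (z \<bullet> (Q22inf *v z)))) = (SUP z. ereal (g z))"
      by (simp add: dE g_def)
    then show ?thesis unfolding kE[symmetric] L_def by simp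
  qed
  define \<alpha> where "\<alpha> k = C * norm (Q11 k - Q11inf)" for k
  define \<beta> where "\<beta> k = C * (norm (Q12 k) + norm (Q21 k))" for k
  define \<gamma> where "\<gamma> k = C * norm (Q22 k - Q22inf)" for k
  define E where "E k t = (1/2) * (\<alpha> k * (norm x)^2 + \<beta> k * norm x * t + \<gamma> k * t^2)" for k t
  have abg0: "\<alpha> k \<ge> 0" "\<beta> k \<ge> 0" "\<gamma> k \<ge> 0" for k
    unfolding \<alpha>_def \<beta>_def \<gamma>_def using C0 by auto
  have alim: "\<alpha> \<longlonglongrightarrow> 0"
  proof -
    have "(\<lambda>k. Q11 k - Q11inf) \<longlonglongrightarrow> 0" using lim11 by (rule LIM_zero)
    then have "(\<lambda>k. norm (Q11 k - Q11inf)) \<longlonglongrightarrow> 0" by (rule tendsto_norm_zero)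
    then show ?thesis unfolding \<alpha>_def[abs_def] using tendsto_mult_right_zero by blast
  qed
  have glim: "\<gamma> \<longlonglongrightarrow> 0"
  proof -
    have "(\<lambda>k. Q22 k - Q22inf) \<longlonglongrightarrow> 0" using lim22 by (rule LIM_zero)
    then have "(\<lambda>k. norm (Q22 k - Q22inf)) \<longlonglongrightarrow> 0" by (rule tendsto_norm_zero)
    then show ?thesis unfolding \<gamma>_def[abs_def] using tendsto_mult_right_zero by blast
  qed
  have blim: "\<beta> \<longlonglongrightarrow> 0"
  proof -
    have "(\<lambda>k. norm (Q12 k) + norm (Q21 k)) \<longlonglongrightarrow> 0 + 0"
      by (intro tendsto_add tendsto_norm_zero lim12 lim21)
    then show ?thesis unfolding \<beta>_def[abs_def] using tendsto_mult_right_zero by simp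
  qed
  have Elim: "(\<lambda>k. E k t) \<longlonglongrightarrow> 0" for t
  proof -
    have "(\<lambda>k. E k t) \<longlonglongrightarrow> (1/2) * (0 * (norm x)^2 + 0 * norm x * t + 0 * t^2)"
      unfolding E_def by (intro tendsto_intros alim blim glim)
    then show ?thesis by simp
  qed
  have Emono: "E k s \<le> E k t" if "0 \<le> s" "s \<le> t" for k s t
  proof -
    have "\<beta> k * norm x * s \<le> \<beta> k * norm x * t"
      using that abg0 by (intro mult_left_mono) auto
    moreover have "\<gamma> k * s^2 \<le> \<gamma> k * t^2"
      using that abg0 by (intro mult_left_mono power_mono) auto
    ultimately show ?thesis unfolding E_def by simp
  qed
  have fbound: "\<bar>f k z - (L + g z)\<bar> \<le> E k (norm z)" for k z
  proof -
    have eq: "f k z - (L + g z) = (1/2) * (x \<bullet> ((Q11 k - Q11inf) *v x) + x \<bullet> (Q12 k *v z)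
        + z \<bullet> (Q21 k *v x) + z \<bullet> ((Q22 k - Q22inf) *v z))"
      unfolding f_def g_def L_def block_quad_def matrix_vector_mult_diff_rdistrib inner_diff_right
      by (simp add: distrib_left right_diff_distrib)
    have b1: "\<bar>x \<bullet> ((Q11 k - Q11inf) *v x)\<bar> \<le> \<alpha> k * (norm x)^2"
      using qbound[of x "Q11 k - Q11inf" x] unfolding \<alpha>_def C_def by (simp add: power2_eq_square)
    have b2: "\<bar>x \<bullet> (Q12 k *v z)\<bar> \<le> C * norm (Q12 k) * (norm x * norm z)"
      using qbound[of x "Q12 k" z] unfolding C_def by simp
    have b3: "\<bar>z \<bullet> (Q21 k *v x)\<bar> \<le> C * norm (Q21 k) * (norm x * norm z)"
      using qbound[of z "Q21 k" x] unfolding C_def by (simp add: mult.commute)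
    have b4: "\<bar>z \<bullet> ((Q22 k - Q22inf) *v z)\<bar> \<le> \<gamma> k * (norm z)^2"
      using qbound[of z "Q22 k - Q22inf" z] unfolding \<gamma>_def C_def by (simp add: power2_eq_square)
    have b23: "C * norm (Q12 k) * (norm x * norm z) + C * norm (Q21 k) * (norm x * norm z)
        = \<beta> k * norm x * norm z" unfolding \<beta>_def by (simp add: algebra_simps)
    have "\<bar>x \<bullet> ((Q11 k - Q11inf) *v x) + x \<bullet> (Q12 k *v z)
        + z \<bullet> (Q21 k *v x) + z \<bullet> ((Q22 k - Q22inf) *v z)\<bar>
        \<le> \<alpha> k * (norm x)^2 + \<beta> k * norm x * norm z + \<gamma> k * (norm z)^2"
      using b1 b2 b3 b4 b23 by linarith
    then show ?thesis unfolding eq E_def abs_mult by simp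
  qed
  have ev_ge: "eventually (\<lambda>k. k \<ge> k0) sequentially" by (rule eventually_ge_at_top)
  show "(\<lambda>k. value_fn A B Phi gamma Psi k x) \<longlonglongrightarrow>
           ereal ((1/2) * (x \<bullet> (Q11inf *v x)))
             + (SUP z. dual_payoff M i Psi z + ereal ((1/2) * (z \<bullet> (Q22inf *v z))))"
    unfolding target
  proof (rule order_tendstoI)
    fix a assume a: "a < ereal (L + \<kappa>)"
    show "eventually (\<lambda>k. a < value_fn A B Phi gamma Psi k x) sequentially"
    proof (cases a)
      case MInf
      show ?thesis using ev_ge
      proof (rule eventually_mono)
        fix k assume "k \<ge> k0"
        have "ereal (f k 0) \<le> (SUP z. ereal (f k z))" by (rule SUP_upper) auto
        then show "a < value_fn A B Phi gamma Psi k x" using W[OF \<open>k \<ge> k0\<close>] MInf by auto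
      qed
    next
      case (real a')
      then have "a' - L < \<kappa>" using a by simp
      then obtain z where z: "a' - L < g z" using kg by blast
      have "eventually (\<lambda>k. E k (norm z) < L + g z - a') sequentially"
        using z by (intro order_tendstoD(2)[OF Elim]) simp
      then show ?thesis using ev_ge
      proof eventually_elim
        case (elim k)
        have "a' < f k z" using fbound[of k z] elim by linarith
        then have "ereal a' < ereal (f k z)" by simp
        also have "ereal (f k z) \<le> (SUP z. ereal (f k z))" by (rule SUP_upper) auto
        finally have "ereal a' < (SUP z. ereal (f k z))" .
        then show ?case unfolding W[OF elim(2)] real .
      qed
    qed (use a in auto)
  next
    fix a assume a: "ereal (L + \<kappa>) < a"
    obtain a' where a': "L + \<kappa> < a'" "ereal a' \<le> a"
    proof (cases a)
      case (real r) then show ?thesis using a that by auto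
    next
      case PInf then show ?thesis using that[of "L + \<kappa> + 1"] by auto
    next
      case MInf then show ?thesis using a by auto
    qed
    define e where "e = a' - (L + \<kappa>)"
    have e0: "e > 0" using a' unfolding e_def by simp
    define R where "R = max r0 (max (8/eps0) \<bar>\<kappa>\<bar>)"
    have R0: "R \<ge> 0" unfolding R_def using r0 by auto
    have ev1: "eventually (\<lambda>k. \<beta> k * norm x < 2) sequentially"
      using blim by (intro order_tendstoD(2)[of _ "0*norm x"] tendsto_intros) auto
    have ev2: "eventually (\<lambda>k. \<gamma> k < eps0/2) sequentially"
      using glim eps0 by (intro order_tendstoD(2)) auto
    have ev3: "eventually (\<lambda>k. E k R < e/2) sequentially"
      using e0 by (intro order_tendstoD(2)[OF Elim]) auto
    have "eventually (\<lambda>k. \<forall>z. f k z \<le> L + \<kappa> + e/2) sequentially"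
      using ev1 ev2 ev3
    proof eventually_elim
      case (elim k)
      show ?case
      proof
        fix z
        show "f k z \<le> L + \<kappa> + e/2"
        proof (cases "norm z \<le> R")
          case True
          have "E k (norm z) \<le> E k R" using Emono True by simp
          then show ?thesis using fbound[of k z] gk[of z] elim by linarith
        next
          case False
          define t where "t = norm z"
          have tR: "t > R" using False t_def by simp
          have t0: "t \<ge> 0" using t_def by simp
          have gzt: "g z \<le> - (eps0/2) * t^2" using ggr[of z] tR unfolding t_def R_def by auto
          have Et: "E k t \<le> (1/2) * \<alpha> k * (norm x)^2 + t + (eps0/4) * t^2"
          proof -
            have "\<beta> k * norm x * t \<le> 2 * t" using elim(1) t0 by (intro mult_right_mono) auto
            moreover have "\<gamma> k * t^2 \<le> (eps0/2) * t^2" using elim(2) by (intro mult_right_mono) auto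
            ultimately show ?thesis unfolding E_def by (simp add: algebra_simps)
          qed
          have aR: "(1/2) * \<alpha> k * (norm x)^2 \<le> E k R"
            unfolding E_def using abg0[of k] R0 by (simp add: mult_nonneg_nonneg)
          have "8/eps0 < t" using tR unfolding R_def by auto
          then have "8 < eps0 * t" using eps0 by (simp add: field_simps)
          then have "8 * t \<le> eps0 * t * t" using t0 by (intro mult_right_mono) auto
          then have q: "(eps0/4) * t^2 \<ge> 2 * t" by (simp add: power2_eq_square algebra_simps)
          have "\<bar>\<kappa>\<bar> < t" using tR unfolding R_def by auto
          have "f k z \<le> L + g z + E k t" using fbound[of k z] unfolding t_def by linarith
          then show ?thesis using gzt Et aR elim(3) q \<open>\<bar>\<kappa>\<bar> < t\<close> by linarith
        qed
      qed
    qed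
    then show "eventually (\<lambda>k. value_fn A B Phi gamma Psi k x < a) sequentially" using ev_ge
    proof eventually_elim
      case (elim k)
      have "(SUP z. ereal (f k z)) \<le> ereal (L + \<kappa> + e/2)" using elim(1) by (auto intro: SUP_least)
      also have "\<dots> < ereal a'" using e0 unfolding e_def by (simp add: field_simps)
      finally show ?case using W[OF elim(2)] a'(2) by auto
    qed
  qed
qed

end
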